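(* For any diagonal section $\delta$, $$\mu_\delta=\max_{x\in[0,1]}\ \min_{t\in[x,g^\delta_U(x)]}\widehat{\delta}(t).$$
   Context: $\mathbb{I}=[0,1]$. A (bivariate) copula is a function $C\colon\mathbb{I}^2\to\mathbb{I}$ with $C(x,0)=C(0,y)=0$, $C(x,1)=x$, $C(1,y)=y$, and $C(b,d)+C(a,c)-C(b,c)-C(a,d)\ge 0$ for all $a\le b$, $c\le d$. A diagonal section is $\delta\colon\mathbb{I}\to\mathbb{I}$ with $\delta(x)\le x$, $0\le\delta(y)-\delta(x)\le 2(y-x)$ for $x\le y$, $\delta(1)=1$; $\widehat{\delta}(x)=x-\delta(x)$. The asymmetry of a copula $C$ is $\mu(C)=\max_{x,y\in\mathbb{I}}|C(x,y)-C(y,x)|$, and $\mu_\delta=\sup\{\mu(C): C\text{ copula with } C(t,t)=\delta(t)\ \forall t\}$. For $x\le y$ let $\mathrm{TV}_x^y(\widehat{\delta})$ be the total variation of $\widehat{\delta}$ on $[x,y]$, and for $y<x$ set $\mathrm{TV}_x^y=-\mathrm{TV}_y^x$. Let $f^\delta(x,y)=y-\frac12(\widehat{\delta}(x)+\widehat{\delta}(y)+\mathrm{TV}_x^y(\widehat{\delta}))$, $D_f^\circ(\delta)=\{(x,y)\in\mathbb{I}^2: f^\delta(x,y)<\min\{x,y\}\}$, $D_f(\delta)=\overline{D_f^\circ(\delta)}\cup\{(x,x):x\in\mathbb{I}\}$, and $g^\delta_U(x)=\max\{y\in\mathbb{I}:(x,y)\in D_f(\delta)\}$. *)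

theory Defs
  imports "HOL-Analysis.Analysis"
begin

definition is_copula :: "(real \<Rightarrow> real \<Rightarrow> real) \<Rightarrow> bool" where
  "is_copula C \<longleftrightarrow>
     (\<forall>x\<in>{0..1}. \<forall>y\<in>{0..1}. C x y \<in> {0..1}) \<and>
     (\<forall>x\<in>{0..1}. C x 0 = 0 \<and> C 0 x = 0 \<and> C x 1 = x \<and> C 1 x = x) \<and>
     (\<forall>a\<in>{0..1}. \<forall>b\<in>{0..1}. \<forall>c\<in>{0..1}. \<forall>d\<in>{0..1}.
        a \<le> b \<longrightarrow> c \<le> d \<longrightarrow> C b d + C a c - C b c - C a d \<ge> 0)"

definition is_diagonal :: "(real \<Rightarrow> real) \<Rightarrow> bool" where
  "is_diagonal \<delta> \<longleftrightarrow>
     (\<forall>x\<in>{0..1}. \<delta> x \<in> {0..1} \<and> \<delta> x \<le> x) \<and>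
     (\<forall>x\<in>{0..1}. \<forall>y\<in>{0..1}. x \<le> y \<longrightarrow> 0 \<le> \<delta> y - \<delta> x \<and> \<delta> y - \<delta> x \<le> 2 * (y - x)) \<and>
     \<delta> 1 = 1"

definition delta_hat :: "(real \<Rightarrow> real) \<Rightarrow> real \<Rightarrow> real" where
  "delta_hat \<delta> x = x - \<delta> x"

definition asym :: "(real \<Rightarrow> real \<Rightarrow> real) \<Rightarrow> real" where
  "asym C = Sup {\<bar>C x y - C y x\<bar> | x y. x \<in> {0..1} \<and> y \<in> {0..1}}"

definition mu_delta :: "(real \<Rightarrow> real) \<Rightarrow> real" where
  "mu_delta \<delta> = Sup {asym C | C. is_copula C \<and> (\<forall>t\<in>{0..1}. C t t = \<delta> t)}"

definition total_variation :: "(real \<Rightarrow> real) \<Rightarrow> real \<Rightarrow> real \<Rightarrow> real" where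
  "total_variation h a b = Sup {(\<Sum>i<n. \<bar>h (t (Suc i)) - h (t i)\<bar>) | t n.
       t 0 = a \<and> t n = b \<and> (\<forall>i<n. t i \<le> t (Suc i))}"

definition signed_TV :: "(real \<Rightarrow> real) \<Rightarrow> real \<Rightarrow> real \<Rightarrow> real" where
  "signed_TV h x y = (if x \<le> y then total_variation h x y else - total_variation h y x)"

definition f_delta :: "(real \<Rightarrow> real) \<Rightarrow> real \<Rightarrow> real \<Rightarrow> real" where
  "f_delta \<delta> x y = y - (delta_hat \<delta> x + delta_hat \<delta> y + signed_TV (delta_hat \<delta>) x y) / 2"

definition Df_open :: "(real \<Rightarrow> real) \<Rightarrow> (real \<times> real) set" where
  "Df_open \<delta> = {(x, y). x \<in> {0..1} \<and> y \<in> {0..1} \<and> f_delta \<delta> x y < min x y}"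

definition Df :: "(real \<Rightarrow> real) \<Rightarrow> (real \<times> real) set" where
  "Df \<delta> = closure (Df_open \<delta>) \<union> {(x, x) | x. x \<in> {0..1}}"

definition gU :: "(real \<Rightarrow> real) \<Rightarrow> real \<Rightarrow> real" where
  "gU \<delta> x = (GREATEST y. y \<in> {0..1} \<and> (x, y) \<in> Df \<delta>)"

end

theory Submission
  imports Defs
begin

lemma part_mono:
  fixes t :: "nat \<Rightarrow> real"
  assumes "\<forall>i<n. t i \<le> t (Suc i)" "i \<le> j" "j \<le> n"
  shows "t i \<le> t j"
proof -
  have "\<forall>k. i + k \<le> n \<longrightarrow> t i \<le> t (i + k)"
  proof
    fix k show "i + k \<le> n \<longrightarrow> t i \<le> t (i + k)"
    proof (induction k)
      case (Suc k)
      then show ?case using assms(1)[rule_format, of "i+k"] by auto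
    qed simp
  qed
  then show ?thesis using assms(2,3) by (metis le_add_diff_inverse)
qed

definition Tri :: "(real \<times> real) set" where
  "Tri = {p. 0 \<le> fst p \<and> fst p \<le> snd p \<and> snd p \<le> 1}"

lemma lip2_cont:
  fixes G :: "real \<times> real \<Rightarrow> real"
  assumes "\<And>p q. p \<in> S \<Longrightarrow> q \<in> S \<Longrightarrow> \<bar>G p - G q\<bar> \<le> L * (\<bar>fst p - fst q\<bar> + \<bar>snd p - snd q\<bar>)" "0 \<le> L"
  shows "continuous_on S G"
proof -
  have "(2 * L)-lipschitz_on S G"
  proof (rule lipschitz_onI)
    fix p q assume pq: "p \<in> S" "q \<in> S"
    have "\<bar>fst p - fst q\<bar> \<le> dist p q" using dist_fst_le[of p q] by (simp add: dist_real_def)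
    moreover have "\<bar>snd p - snd q\<bar> \<le> dist p q" using dist_snd_le[of p q] by (simp add: dist_real_def)
    ultimately have "L * (\<bar>fst p - fst q\<bar> + \<bar>snd p - snd q\<bar>) \<le> L * (2 * dist p q)"
      using assms(2) by (intro mult_left_mono) auto
    then show "dist (G p) (G q) \<le> 2 * L * dist p q" using assms(1)[OF pq] by (simp add: dist_real_def)
  qed (use assms in auto)
  then show ?thesis by (rule lipschitz_on_continuous_on)
qed

lemma compact_Tri: "compact Tri"
proof -
  have "Tri = ({0..1} \<times> {0..1}) \<inter> {p. fst p \<le> snd p}" unfolding Tri_def by auto
  moreover have "closed {p :: real \<times> real. fst p \<le> snd p}"
    by (rule closed_Collect_le) (auto intro: continuous_intros)
  moreover have "compact ({0..1::real} \<times> {0..1::real} \<inter> {p. fst p \<le> snd p})"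
    by (rule compact_Int_closed[OF compact_Times[OF compact_Icc compact_Icc]]) fact
  ultimately show ?thesis by simp
qed


lemma half_le: "a \<le> 2 * b \<Longrightarrow> a / 2 \<le> (b::real)" by simp
lemma half_le': "a / 2 \<le> b \<Longrightarrow> a \<le> 2 * (b::real)" by simp

definition R :: "(real \<Rightarrow> real \<Rightarrow> real) \<Rightarrow> real \<Rightarrow> real \<Rightarrow> real \<Rightarrow> real \<Rightarrow> real" where
  "R K a b c d = K b d + K a c - K b c - K a d"

lemma R_split_u: "R K a b c d = R K a s c d + R K s b c d" unfolding R_def by simp
lemma R_split_v: "R K a b c d = R K a b c s + R K a b s d" unfolding R_def by simp
lemma R_deg_u: "R K a a c d = 0" unfolding R_def by simp
lemma R_deg_v: "R K a b c c = 0" unfolding R_def by simp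

lemma min_rect: "x1 \<le> x2 \<Longrightarrow> y1 \<le> y2 \<Longrightarrow> 0 \<le> min x2 y2 + min x1 y1 - min x2 y1 - min x1 (y2::real)"
  by (auto simp: min_def)

lemma min_three: "0 \<le> min A (min B C) + B - min B C - min A (B::real)"
  by (auto simp: min_def)

lemma min_shift: "min u (a + b) = a + min (u - a) (b::real)"
  by (auto simp: min_def)

context
  fixes \<delta> :: "real \<Rightarrow> real"
  assumes diag: "is_diagonal \<delta>"
begin

abbreviation "h \<equiv> delta_hat \<delta>"
abbreviation "TV \<equiv> total_variation h"

lemma h_nonneg: "x \<in> {0..1} \<Longrightarrow> 0 \<le> h x"
  using diag by (auto simp: is_diagonal_def delta_hat_def)

lemma h0: "h 0 = 0"
proof -
  have "\<delta> 0 \<in> {0..1}" "\<delta> 0 \<le> 0" using diag by (auto simp: is_diagonal_def)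
  then show ?thesis by (simp add: delta_hat_def)
qed

lemma h1: "h 1 = 0"
  using diag by (auto simp: is_diagonal_def delta_hat_def)

lemma h_lip: "x \<in> {0..1} \<Longrightarrow> y \<in> {0..1} \<Longrightarrow> \<bar>h y - h x\<bar> \<le> \<bar>y - x\<bar>"
proof -
  assume xy: "x \<in> {0..1}" "y \<in> {0..1}"
  have *: "\<And>a b. a \<in> {0..1} \<Longrightarrow> b \<in> {0..1} \<Longrightarrow> a \<le> b \<Longrightarrow> \<bar>h b - h a\<bar> \<le> b - a"
  proof -
    fix a b :: real assume "a \<in> {0..1}" "b \<in> {0..1}" "a \<le> b"
    then have "0 \<le> \<delta> b - \<delta> a" "\<delta> b - \<delta> a \<le> 2 * (b - a)"
      using diag unfolding is_diagonal_def by blast+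
    then show "\<bar>h b - h a\<bar> \<le> b - a" by (simp add: delta_hat_def abs_le_iff)
  qed
  show ?thesis
  proof (cases "x \<le> y")
    case True then show ?thesis using *[OF xy] by simp
  next
    case False then show ?thesis using *[OF xy(2) xy(1)] by (simp add: abs_minus_commute)
  qed
qed

lemma h_le_x: "x \<in> {0..1} \<Longrightarrow> h x \<le> x"
  using h_lip[of 0 x] h0 by auto

lemma h_le_1x: "x \<in> {0..1} \<Longrightarrow> h x \<le> 1 - x"
  using h_lip[of x 1] h1 by auto

definition psum :: "(nat \<Rightarrow> real) \<Rightarrow> nat \<Rightarrow> real" where
  "psum t n = (\<Sum>i<n. \<bar>h (t (Suc i)) - h (t i)\<bar>)"

definition PS :: "real \<Rightarrow> real \<Rightarrow> real set" where
  "PS a b = {psum t n | t n. t 0 = a \<and> t n = b \<and> (\<forall>i<n. t i \<le> t (Suc i))}"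

lemma TV_PS: "TV a b = Sup (PS a b)"
  unfolding total_variation_def PS_def psum_def by simp

lemma psum_le:
  assumes "0 \<le> a" "b \<le> 1" "t 0 = a" "t n = b" "\<forall>i<n. t i \<le> t (Suc i)"
  shows "psum t n \<le> b - a"
proof -
  have inr: "t i \<in> {0..1}" if "i \<le> n" for i
    using part_mono[OF assms(5), of 0 i] part_mono[OF assms(5), of i n] that assms by auto
  have "psum t n \<le> (\<Sum>i<n. t (Suc i) - t i)"
    unfolding psum_def
  proof (rule sum_mono)
    fix i assume "i \<in> {..<n}"
    then have "\<bar>h (t (Suc i)) - h (t i)\<bar> \<le> \<bar>t (Suc i) - t i\<bar>"
      using h_lip[OF inr inr, of i "Suc i"] by auto
    then show "\<bar>h (t (Suc i)) - h (t i)\<bar> \<le> t (Suc i) - t i" using assms(5) \<open>i \<in> {..<n}\<close> by auto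
  qed
  also have "\<dots> = b - a" using sum_lessThan_telescope[of t n] assms by simp
  finally show ?thesis .
qed

lemma PS_ne: "a \<le> b \<Longrightarrow> \<bar>h b - h a\<bar> \<in> PS a b"
  unfolding PS_def psum_def
  apply (rule CollectI)
  apply (rule exI[where x="\<lambda>i. if i = 0 then a else b"])
  apply (rule exI[where x=1])
  by auto

lemma PS_bdd: "0 \<le> a \<Longrightarrow> b \<le> 1 \<Longrightarrow> s \<in> PS a b \<Longrightarrow> s \<le> b - a"
  unfolding PS_def using psum_le by auto

lemma PS_bdd_above: "0 \<le> a \<Longrightarrow> b \<le> 1 \<Longrightarrow> bdd_above (PS a b)"
  using PS_bdd by (meson bdd_above.I)

lemma TV_ge: "0 \<le> a \<Longrightarrow> a \<le> b \<Longrightarrow> b \<le> 1 \<Longrightarrow> \<bar>h b - h a\<bar> \<le> TV a b"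
  unfolding TV_PS by (rule cSup_upper[OF PS_ne PS_bdd_above])

lemma TV_le: "0 \<le> a \<Longrightarrow> a \<le> b \<Longrightarrow> b \<le> 1 \<Longrightarrow> TV a b \<le> b - a"
  unfolding TV_PS by (rule cSup_least) (use PS_ne[of a b] PS_bdd[of a b] in auto)

lemma TV_nonneg: "0 \<le> a \<Longrightarrow> a \<le> b \<Longrightarrow> b \<le> 1 \<Longrightarrow> 0 \<le> TV a b"
  using TV_ge[of a b] by linarith

lemma TV_refl: "0 \<le> a \<Longrightarrow> a \<le> 1 \<Longrightarrow> TV a a = 0"
  using TV_le[of a a] TV_nonneg[of a a] by linarith

lemma psum_concat:
  assumes "t n = s 0"
  defines "r \<equiv> \<lambda>i. if i \<le> n then t i else s (i - n)"
  shows "psum r (n + k) = psum t n + psum s k"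
proof (induction k)
  case 0
  have "psum r n = psum t n" unfolding psum_def r_def by (intro sum.cong) auto
  then show ?case by (simp add: psum_def)
next
  case (Suc k)
  have "r (n + k) = s k" unfolding r_def using assms(1) by auto
  moreover have "r (Suc (n + k)) = s (Suc k)" unfolding r_def by auto
  ultimately show ?case using Suc by (simp add: psum_def)
qed

lemma TV_super:
  assumes "0 \<le> a" "a \<le> b" "b \<le> c" "c \<le> 1"
  shows "TV a b + TV b c \<le> TV a c"
proof -
  have key: "s1 + s2 \<le> TV a c" if S1: "s1 \<in> PS a b" and S2: "s2 \<in> PS b c" for s1 s2
  proof -
    obtain t n where t: "s1 = psum t n" "t 0 = a" "t n = b" "\<forall>i<n. t i \<le> t (Suc i)"
      using S1 unfolding PS_def by blast
    obtain s k where s: "s2 = psum s k" "s 0 = b" "s k = c" "\<forall>i<k. s i \<le> s (Suc i)"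
      using S2 unfolding PS_def by blast
    define r where "r = (\<lambda>i. if i \<le> n then t i else s (i - n))"
    have "psum r (n + k) = s1 + s2" using psum_concat[of t n s k] t s unfolding r_def by simp
    moreover have "r 0 = a" "r (n + k) = c" using t s unfolding r_def by auto
    moreover have "\<forall>i<n+k. r i \<le> r (Suc i)"
    proof (intro allI impI)
      fix i assume "i < n + k"
      show "r i \<le> r (Suc i)"
      proof (cases "i < n")
        case True then show ?thesis using t(4) unfolding r_def by auto
      next
        case False
        then have "i - n < k" "Suc i - n = Suc (i - n)" using \<open>i < n + k\<close> by auto
        then show ?thesis using s(4) t(3) s(2) False unfolding r_def by auto
      qed
    qed
    ultimately have "s1 + s2 \<in> PS a c" unfolding PS_def
      by (intro CollectI exI[where x=r] exI[where x="n+k"]) auto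
    then show ?thesis unfolding TV_PS by (rule cSup_upper[OF _ PS_bdd_above]) (use assms in auto)
  qed
  have "\<forall>s2\<in>PS b c. TV a b \<le> TV a c - s2"
  proof
    fix s2 assume "s2 \<in> PS b c"
    show "TV a b \<le> TV a c - s2" unfolding TV_PS[of a b]
    proof (rule cSup_least)
      show "PS a b \<noteq> {}" using PS_ne[of a b] assms by auto
      fix x assume "x \<in> PS a b"
      then show "x \<le> TV a c - s2" using key[OF _ \<open>s2 \<in> PS b c\<close>, of x] by linarith
    qed
  qed
  then have "TV b c \<le> TV a c - TV a b" unfolding TV_PS[of b c]
  proof (intro cSup_least)
    show "PS b c \<noteq> {}" using PS_ne[of b c] assms by auto
    fix x assume "\<forall>s2\<in>PS b c. TV a b \<le> TV a c - s2" "x \<in> PS b c"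
    then show "x \<le> TV a c - TV a b" by force
  qed
  then show ?thesis by simp
qed


lemma psum_sub:
  assumes "0 \<le> a" "a \<le> b"
  shows "\<forall>c t. t 0 = a \<and> t n = c \<and> (\<forall>i<n. t i \<le> t (Suc i)) \<and> b \<le> c \<and> c \<le> 1
            \<longrightarrow> psum t n \<le> TV a b + TV b c"
proof (induction n)
  case 0
  show ?case
  proof (intro allI impI)
    fix c t assume H: "t 0 = a \<and> t 0 = c \<and> (\<forall>i<0. t i \<le> t (Suc i)) \<and> b \<le> c \<and> c \<le> 1"
    then have "a = b" "b = c" using assms by auto
    then have "TV a b = 0" "TV b c = 0" using TV_refl[of a] assms H by auto
    then show "psum t 0 \<le> TV a b + TV b c" by (simp add: psum_def)
  qed
next
  case (Suc n)
  show ?case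
  proof (intro allI impI)
    fix c t assume H: "t 0 = a \<and> t (Suc n) = c \<and> (\<forall>i<Suc n. t i \<le> t (Suc i)) \<and> b \<le> c \<and> c \<le> 1"
    define c' where "c' = t n"
    have mono: "\<forall>i<Suc n. t i \<le> t (Suc i)" using H by blast
    have "a \<le> c'" using part_mono[OF mono, of 0 n] H unfolding c'_def by auto
    have "c' \<le> c" using mono H unfolding c'_def by auto
    have ps: "psum t (Suc n) = psum t n + \<bar>h c - h c'\<bar>" using H unfolding psum_def c'_def by simp
    have m2: "\<forall>i<n. t i \<le> t (Suc i)" using mono by auto
    show "psum t (Suc n) \<le> TV a b + TV b c"
    proof (cases "b \<le> c'")
      case True
      have "psum t n \<le> TV a b + TV b c'"
        using Suc[rule_format, of t c'] H m2 True \<open>c' \<le> c\<close> unfolding c'_def by auto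
      moreover have "TV b c' + TV c' c \<le> TV b c" using TV_super[of b c' c] True \<open>c' \<le> c\<close> H assms by auto
      moreover have "\<bar>h c - h c'\<bar> \<le> TV c' c" using TV_ge[of c' c] True \<open>c' \<le> c\<close> H assms by auto
      ultimately show ?thesis using ps by linarith
    next
      case False
      have "psum t n \<in> PS a c'" unfolding PS_def using H m2 c'_def by blast
      then have "psum t n \<le> TV a c'" unfolding TV_PS
        by (rule cSup_upper[OF _ PS_bdd_above]) (use assms False H in auto)
      moreover have "TV a c' + TV c' b \<le> TV a b" using TV_super[of a c' b] False \<open>a \<le> c'\<close> H assms by auto
      moreover have "\<bar>h b - h c'\<bar> \<le> TV c' b" using TV_ge[of c' b] False \<open>a \<le> c'\<close> H assms by auto
      moreover have "\<bar>h c - h b\<bar> \<le> TV b c" using TV_ge[of b c] H assms by auto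
      ultimately show ?thesis using ps by linarith
    qed
  qed
qed

lemma TV_sub:
  assumes "0 \<le> a" "a \<le> b" "b \<le> c" "c \<le> 1"
  shows "TV a c \<le> TV a b + TV b c"
  unfolding TV_PS[of a c]
proof (rule cSup_least)
  show "PS a c \<noteq> {}" using PS_ne[of a c] assms by auto
  fix x assume "x \<in> PS a c"
  then obtain t n where "x = psum t n" "t 0 = a" "t n = c" "\<forall>i<n. t i \<le> t (Suc i)"
    unfolding PS_def by blast
  then show "x \<le> TV a b + TV b c" using psum_sub[OF assms(1,2), of n] assms by auto
qed

lemma TV_add:
  assumes "0 \<le> a" "a \<le> b" "b \<le> c" "c \<le> 1"
  shows "TV a c = TV a b + TV b c"
  using TV_sub[OF assms] TV_super[OF assms] by linarith

definition T :: "real \<Rightarrow> real" where "T u = TV 0 u"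

lemma TV_T: "0 \<le> a \<Longrightarrow> a \<le> b \<Longrightarrow> b \<le> 1 \<Longrightarrow> TV a b = T b - T a"
  unfolding T_def using TV_add[of 0 a b] by simp

abbreviation "F \<equiv> f_delta \<delta>"

lemma F_tri: "0 \<le> x \<Longrightarrow> x \<le> y \<Longrightarrow> y \<le> 1 \<Longrightarrow> F x y = y - (h x + h y + T y - T x) / 2"
  unfolding f_delta_def signed_TV_def using TV_T[of x y] by simp


abbreviation mi :: "real \<Rightarrow> real \<Rightarrow> real" where "mi x y \<equiv> Inf (h ` {x..y})"

lemma mi_bdd: "0 \<le> x \<Longrightarrow> y \<le> 1 \<Longrightarrow> bdd_below (h ` {x..y})"
  by (rule bdd_belowI[where m=0]) (auto intro: h_nonneg)

lemma mi_lower: "0 \<le> x \<Longrightarrow> y \<le> 1 \<Longrightarrow> t \<in> {x..y} \<Longrightarrow> mi x y \<le> h t"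
  by (rule cInf_lower) (auto intro: mi_bdd)

lemma mi_greatest: "x \<le> y \<Longrightarrow> (\<And>t. t \<in> {x..y} \<Longrightarrow> c \<le> h t) \<Longrightarrow> c \<le> mi x y"
  by (rule cInf_greatest) auto

lemma mi_nonneg: "0 \<le> x \<Longrightarrow> x \<le> y \<Longrightarrow> y \<le> 1 \<Longrightarrow> 0 \<le> mi x y"
  by (rule mi_greatest) (auto intro: h_nonneg)

lemma mi_refl: "mi x x = h x" by simp

lemma mi_split:
  assumes "0 \<le> x" "x \<le> y" "y \<le> z" "z \<le> 1"
  shows "mi x z = min (mi x y) (mi y z)"
proof -
  have "{x..z} = {x..y} \<union> {y..z}" using assms by auto
  then have "h ` {x..z} = h ` {x..y} \<union> h ` {y..z}" by (simp add: image_Un)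
  then show ?thesis using cInf_union_distrib[of "h ` {x..y}" "h ` {y..z}"] mi_bdd assms
    by (simp add: inf_min)
qed

lemma mi_lip1:
  assumes "0 \<le> x" "x \<le> y" "y \<le> 1" "0 \<le> x'" "x' \<le> y'" "y' \<le> 1"
  shows "mi x' y' \<le> mi x y + \<bar>x - x'\<bar> + \<bar>y - y'\<bar>"
proof -
  have "mi x' y' - \<bar>x - x'\<bar> - \<bar>y - y'\<bar> \<le> mi x y"
  proof (rule mi_greatest)
    show "x \<le> y" by fact
    fix t assume t: "t \<in> {x..y}"
    define t' where "t' = max x' (min y' t)"
    have t'in: "t' \<in> {x'..y'}" unfolding t'_def using assms by auto
    have "\<bar>t - t'\<bar> \<le> \<bar>x - x'\<bar> + \<bar>y - y'\<bar>"
    proof (cases "t < x'")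
      case True then have "t' = x'" unfolding t'_def using assms by auto
      moreover have "x' - x \<le> \<bar>x - x'\<bar>" "0 \<le> \<bar>y - y'\<bar>" by auto
      ultimately show ?thesis using True t by (simp add: abs_if)
    next
      case False
      show ?thesis
      proof (cases "t > y'")
        case True then have "t' = y'" unfolding t'_def using assms by auto
        moreover have "y - y' \<le> \<bar>y - y'\<bar>" "0 \<le> \<bar>x - x'\<bar>" by auto
        ultimately show ?thesis using True t by (simp add: abs_if)
      next
        case False2: False
        then have "t' = t" unfolding t'_def using False by auto
        then show ?thesis by simp
      qed
    qed
    moreover have "mi x' y' \<le> h t'" using mi_lower[OF assms(4,6) t'in] .
    moreover have "\<bar>h t' - h t\<bar> \<le> \<bar>t' - t\<bar>" using h_lip[of t t'] t t'in assms by auto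
    ultimately show "mi x' y' - \<bar>x - x'\<bar> - \<bar>y - y'\<bar> \<le> h t" unfolding abs_le_iff abs_minus_commute[of t' t] by argo
  qed
  then show ?thesis by linarith
qed

lemma mi_lip:
  assumes "0 \<le> x" "x \<le> y" "y \<le> 1" "0 \<le> x'" "x' \<le> y'" "y' \<le> 1"
  shows "\<bar>mi x' y' - mi x y\<bar> \<le> \<bar>x - x'\<bar> + \<bar>y - y'\<bar>"
  using mi_lip1[OF assms] mi_lip1[OF assms(4-6) assms(1-3)] by (simp add: abs_minus_commute abs_le_iff)

lemma T_prop:
  assumes "0 \<le> u" "u \<le> v" "v \<le> 1"
  shows "\<bar>h v - h u\<bar> \<le> T v - T u" "T v - T u \<le> v - u"
  using TV_T[OF assms] TV_ge[OF assms] TV_le[OF assms] by auto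

lemma T_lip: "u \<in> {0..1} \<Longrightarrow> v \<in> {0..1} \<Longrightarrow> \<bar>T v - T u\<bar> \<le> \<bar>v - u\<bar>"
proof (cases "u \<le> v")
  case True
  assume "u \<in> {0..1}" "v \<in> {0..1}"
  then show ?thesis using True T_prop[of u v] by (auto simp: abs_le_iff)
next
  case False
  assume "u \<in> {0..1}" "v \<in> {0..1}"
  then show ?thesis using False T_prop[of v u] by (auto simp: abs_le_iff)
qed

lemma F_lip:
  assumes "0 \<le> x" "x \<le> y" "y \<le> 1" "0 \<le> x'" "x' \<le> y'" "y' \<le> 1"
  shows "\<bar>F x' y' - F x y\<bar> \<le> 2 * (\<bar>x - x'\<bar> + \<bar>y - y'\<bar>)"
proof -
  have "\<bar>h x' - h x\<bar> \<le> \<bar>x' - x\<bar>" "\<bar>h y' - h y\<bar> \<le> \<bar>y' - y\<bar>"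
       "\<bar>T x' - T x\<bar> \<le> \<bar>x' - x\<bar>" "\<bar>T y' - T y\<bar> \<le> \<bar>y' - y\<bar>"
    using h_lip T_lip assms by auto
  moreover have "x - x' \<le> \<bar>x - x'\<bar>" "x' - x \<le> \<bar>x - x'\<bar>" "y - y' \<le> \<bar>y - y'\<bar>" "y' - y \<le> \<bar>y - y'\<bar>"
    by auto
  ultimately show ?thesis unfolding F_tri[OF assms(1-3)] F_tri[OF assms(4-6)] abs_le_iff abs_minus_commute[of x' x] abs_minus_commute[of y' y]
    by argo
qed

lemma cop_rect: "is_copula C \<Longrightarrow> a \<in> {0..1} \<Longrightarrow> b \<in> {0..1} \<Longrightarrow> c \<in> {0..1} \<Longrightarrow> d \<in> {0..1}
   \<Longrightarrow> a \<le> b \<Longrightarrow> c \<le> d \<Longrightarrow> C b d + C a c - C b c - C a d \<ge> 0"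
  unfolding is_copula_def by blast

lemma cop_bd: "is_copula C \<Longrightarrow> x \<in> {0..1} \<Longrightarrow> C x 0 = 0 \<and> C 0 x = 0 \<and> C x 1 = x \<and> C 1 x = x"
  unfolding is_copula_def by blast

lemma cop_transp: "is_copula C \<Longrightarrow> is_copula (\<lambda>x y. C y x)"
  unfolding is_copula_def
proof (elim conjE, intro conjI ballI impI)
  fix a b c d :: real
  assume H: "\<forall>a\<in>{0..1}. \<forall>b\<in>{0..1}. \<forall>c\<in>{0..1}. \<forall>d\<in>{0..1}. a \<le> b \<longrightarrow> c \<le> d \<longrightarrow> 0 \<le> C b d + C a c - C b c - C a d"
    and "a \<in> {0..1}" "b \<in> {0..1}" "c \<in> {0..1}" "d \<in> {0..1}" "a \<le> b" "c \<le> d"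
  then have "0 \<le> C d b + C c a - C d a - C c b" using H by blast
  then show "0 \<le> C d b + C c a - C c b - C d a" by linarith
qed auto

lemma cop_F:
  assumes C: "is_copula C" and dg: "\<forall>t\<in>{0..1}. C t t = \<delta> t"
    and xy: "0 \<le> x" "x \<le> y" "y \<le> 1"
  shows "C x y \<le> F x y"
proof -
  have dd: "C t t = t - h t" if "t \<in> {0..1}" for t using dg that by (simp add: delta_hat_def)
  have "s \<le> 2 * (y - C x y) - h x - h y" if sPS: "s \<in> PS x y" for s
  proof -
    obtain t n where t: "s = psum t n" "t 0 = x" "t n = y" and mono: "\<forall>i<n. t i \<le> t (Suc i)"
      using sPS unfolding PS_def by blast
    have inr: "x \<le> t i \<and> t i \<le> y" if "i \<le> n" for i
      using part_mono[OF mono, of 0 i] part_mono[OF mono, of i n] that t by auto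
    have "k \<le> n \<longrightarrow> C x (t k) \<le> t k - (h x + h (t k) + psum t k) / 2" for k
    proof (induction k)
      case 0 then show ?case using dd[of x] xy t by (simp add: psum_def)
    next
      case (Suc k)
      show ?case
      proof
        assume k: "Suc k \<le> n"
        define a where "a = t k" define b where "b = t (Suc k)"
        have IH: "C x a \<le> a - (h x + h a + psum t k) / 2" using Suc k unfolding a_def by auto
        have ab: "x \<le> a" "a \<le> b" "b \<le> y" using inr[of k] inr[of "Suc k"] mono k unfolding a_def b_def by auto
        have ps: "psum t (Suc k) = psum t k + \<bar>h b - h a\<bar>" unfolding psum_def a_def b_def by simp
        show "C x (t (Suc k)) \<le> t (Suc k) - (h x + h (t (Suc k)) + psum t (Suc k)) / 2"
          unfolding b_def[symmetric] ps
        proof (cases "h a \<le> h b")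
          case True
          have "C a b + C x a - C a a - C x b \<ge> 0" using cop_rect[OF C, of x a a b] ab xy by auto
          moreover have "C b b + C a 0 - C b 0 - C a b \<ge> 0" using cop_rect[OF C, of a b 0 b] ab xy by auto
          moreover have "C a 0 = 0" "C b 0 = 0" using cop_bd[OF C] ab xy by auto
          moreover have "C a a = a - h a" "C b b = b - h b" using dd ab xy by auto
          moreover have "\<bar>h b - h a\<bar> = h b - h a" using True by simp
          ultimately show "C x b \<le> b - (h x + h b + (psum t k + \<bar>h b - h a\<bar>)) / 2" using IH by argo
        next
          case False
          have "C 1 b + C x a - C 1 a - C x b \<ge> 0" using cop_rect[OF C, of x 1 a b] ab xy by auto
          moreover have "C 1 b = b" "C 1 a = a" using cop_bd[OF C] ab xy by auto
          moreover have "\<bar>h b - h a\<bar> = h a - h b" using False by simp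
          ultimately show "C x b \<le> b - (h x + h b + (psum t k + \<bar>h b - h a\<bar>)) / 2" using IH by argo
        qed
      qed
    qed
    then have "C x y \<le> y - (h x + h y + psum t n) / 2" using t by auto
    then show ?thesis using t by argo
  qed
  then have "TV x y \<le> 2 * (y - C x y) - h x - h y" unfolding TV_PS
    by (intro cSup_least) (use PS_ne[of x y] xy in auto)
  moreover have "F x y = y - (h x + h y + TV x y) / 2" unfolding f_delta_def signed_TV_def using xy by simp
  ultimately show ?thesis by argo
qed


lemma cop_lower:
  assumes C: "is_copula C" and dg: "\<forall>t\<in>{0..1}. C t t = \<delta> t"
    and xy: "0 \<le> x" "x \<le> y" "y \<le> 1"
  shows "x - mi x y \<le> C y x"
proof -
  have "x - C y x \<le> mi x y"
  proof (rule mi_greatest)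
    show "x \<le> y" by fact
    fix t assume t: "t \<in> {x..y}"
    have "C y x + C t 0 - C y 0 - C t x \<ge> 0" using cop_rect[OF C, of t y 0 x] t xy by auto
    moreover have "C 1 t + C t x - C 1 x - C t t \<ge> 0" using cop_rect[OF C, of t 1 x t] t xy by auto
    moreover have "C t 0 = 0" "C y 0 = 0" "C 1 t = t" "C 1 x = x" using cop_bd[OF C] t xy by auto
    moreover have "C t t = t - h t" using dg t xy by (auto simp: delta_hat_def)
    ultimately show "x - C y x \<le> h t" by argo
  qed
  then show ?thesis by argo
qed

lemma cop_le_x:
  assumes C: "is_copula C" and xy: "x \<in> {0..1}" "y \<in> {0..1}"
  shows "C x y \<le> x"
proof -
  have "C x 1 + C 0 y - C x y - C 0 1 \<ge> 0" using cop_rect[OF C, of 0 x y 1] xy by auto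
  moreover have "C x 1 = x" "C 0 y = 0" "C 0 1 = 0" using cop_bd[OF C] xy by auto
  ultimately show ?thesis by argo
qed

definition Bf :: "real \<Rightarrow> real \<Rightarrow> real" where
  "Bf x y = min 0 (F x y - x) + mi x y"

lemma cop_asym1:
  assumes C: "is_copula C" and dg: "\<forall>t\<in>{0..1}. C t t = \<delta> t"
    and xy: "0 \<le> x" "x \<le> y" "y \<le> 1"
  shows "C x y - C y x \<le> Bf x y"
proof -
  have "C x y \<le> x" using cop_le_x[OF C] xy by auto
  moreover have "C x y \<le> F x y" using cop_F[OF C dg xy] .
  moreover have "x - mi x y \<le> C y x" using cop_lower[OF C dg xy] .
  ultimately show ?thesis unfolding Bf_def by (simp add: min_def)
qed

lemma cop_abs:
  assumes C: "is_copula C" and dg: "\<forall>t\<in>{0..1}. C t t = \<delta> t"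
    and M: "\<And>x y. 0 \<le> x \<Longrightarrow> x \<le> y \<Longrightarrow> y \<le> 1 \<Longrightarrow> Bf x y \<le> M"
    and xy: "x \<in> {0..1}" "y \<in> {0..1}"
  shows "\<bar>C x y - C y x\<bar> \<le> M"
proof -
  have C': "is_copula (\<lambda>x y. C y x)" using cop_transp[OF C] .
  have dg': "\<forall>t\<in>{0..1}. (\<lambda>x y. C y x) t t = \<delta> t" using dg by simp
  have *: "\<bar>C a b - C b a\<bar> \<le> M" if "0 \<le> a" "a \<le> b" "b \<le> 1" for a b
    using cop_asym1[OF C dg that] cop_asym1[OF C' dg' that] M[OF that] by (simp add: abs_le_iff)
  show ?thesis
  proof (cases "x \<le> y")
    case True then show ?thesis using * xy by auto
  next
    case False then show ?thesis using *[of y x] xy by (auto simp: abs_minus_commute)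
  qed
qed

lemma Bf_lip:
  assumes "0 \<le> x" "x \<le> y" "y \<le> 1" "0 \<le> x'" "x' \<le> y'" "y' \<le> 1"
  shows "\<bar>Bf x' y' - Bf x y\<bar> \<le> 4 * (\<bar>x - x'\<bar> + \<bar>y - y'\<bar>)"
proof -
  have a: "\<bar>F x' y' - F x y\<bar> \<le> 2 * (\<bar>x - x'\<bar> + \<bar>y - y'\<bar>)" using F_lip[OF assms] .
  have b: "\<bar>mi x' y' - mi x y\<bar> \<le> \<bar>x - x'\<bar> + \<bar>y - y'\<bar>" using mi_lip[OF assms] .
  have c: "\<bar>min 0 (F x' y' - x') - min 0 (F x y - x)\<bar> \<le> \<bar>(F x' y' - x') - (F x y - x)\<bar>"
    by (auto simp: min_def abs_if)
  have d: "\<bar>(F x' y' - x') - (F x y - x)\<bar> \<le> \<bar>F x' y' - F x y\<bar> + \<bar>x - x'\<bar>"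
  proof -
    have eq: "(F x' y' - x') - (F x y - x) = (F x' y' - F x y) + (x - x')" by simp
    show ?thesis unfolding eq by (rule abs_triangle_ineq)
  qed
  show ?thesis unfolding Bf_def using a b c d by (simp add: abs_le_iff) argo
qed


lemma F_refl: "x \<in> {0..1} \<Longrightarrow> F x x = x - h x"
  using TV_refl[of x] unfolding f_delta_def signed_TV_def by simp

lemma F_x1: "x \<in> {0..1} \<Longrightarrow> x \<le> F x 1"
proof -
  assume x: "x \<in> {0..1}"
  have "TV x 1 \<le> 1 - x" using TV_le[of x 1] x by auto
  moreover have "h x \<le> 1 - x" using h_le_1x x by auto
  moreover have "F x 1 = 1 - (h x + h 1 + TV x 1) / 2" unfolding f_delta_def signed_TV_def using x by simp
  ultimately show ?thesis using h1 by argo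
qed

lemma F_0x: "x \<in> {0..1} \<Longrightarrow> 0 \<le> F 0 x"
proof -
  assume x: "x \<in> {0..1}"
  have "TV 0 x \<le> x" using TV_le[of 0 x] x by auto
  moreover have "h x \<le> x" using h_le_x x by auto
  moreover have "F 0 x = x - (h 0 + h x + TV 0 x) / 2" unfolding f_delta_def signed_TV_def using x by simp
  ultimately show ?thesis using h0 by argo
qed

lemma F_mono_y:
  assumes "0 \<le> x" "x \<le> y" "y \<le> y'" "y' \<le> 1"
  shows "F x y \<le> F x y'" "F x y' - F x y \<le> 2 * (y' - y)"
proof -
  have e1: "F x y = y - (h x + h y + T y - T x) / 2" using F_tri assms by auto
  have e2: "F x y' = y' - (h x + h y' + T y' - T x) / 2" using F_tri assms by auto
  have "\<bar>h y' - h y\<bar> \<le> T y' - T y" "T y' - T y \<le> y' - y" using T_prop[of y y'] assms by auto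
  then have a: "h y' - h y \<le> T y' - T y" "h y - h y' \<le> T y' - T y" "T y' - T y \<le> y' - y" by auto
  have e: "2 * F x y' - 2 * F x y = 2 * y' - 2 * y - h y' + h y - T y' + T y" unfolding e1 e2 by (simp add: field_simps)
  show "F x y \<le> F x y'" using a e by linarith
  have "F x y' - F x y \<le> 2 * y' - 2 * y" using a e by linarith
  then show "F x y' - F x y \<le> 2 * (y' - y)" by (simp add: algebra_simps)
qed

lemma phi_mono:
  assumes "0 \<le> x" "x \<le> y" "y \<le> y'" "y' \<le> 1"
  shows "F x y + mi x y \<le> F x y' + mi x y'"
proof -
  have sp: "mi x y' = min (mi x y) (mi y y')" using mi_split[of x y y'] assms by simp
  have e1: "F x y = y - (h x + h y + T y - T x) / 2" using F_tri assms by auto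
  have e2: "F x y' = y' - (h x + h y' + T y' - T x) / 2" using F_tri assms by auto
  have e: "2 * F x y' - 2 * F x y = 2 * y' - 2 * y - h y' + h y - T y' + T y" unfolding e1 e2 by (simp add: field_simps)
  have t: "T y' - T y \<le> y' - y" using T_prop[of y y'] assms by auto
  have my: "mi x y \<le> h y" using mi_lower[of x y y] assms by auto
  have myy: "h y + h y' - y' + y \<le> 2 * mi y y'"
  proof -
    have "(h y + h y' - y' + y) / 2 \<le> mi y y'"
    proof (rule mi_greatest)
      show "y \<le> y'" by fact
      fix t assume t: "t \<in> {y..y'}"
      have "\<bar>h t - h y\<bar> \<le> t - y" "\<bar>h y' - h t\<bar> \<le> y' - t" using h_lip[of y t] h_lip[of t y'] t assms by auto
      then have "h y - h t \<le> t - y" "h y' - h t \<le> y' - t" by auto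
      then have "h y + h y' - y' + y \<le> 2 * h t" by linarith
      then show "(h y + h y' - y' + y) / 2 \<le> h t" by (rule half_le)
    qed
    then show ?thesis by (rule half_le')
  qed
  show ?thesis
  proof (cases "mi x y \<le> mi y y'")
    case True
    then have "mi x y' = mi x y" using sp by simp
    then show ?thesis using F_mono_y(1)[OF assms] by simp
  next
    case False
    then have "mi x y' = mi y y'" using sp by simp
    moreover have "F x y + mi x y \<le> F x y' + mi y y'" using e t my myy by linarith
    ultimately show ?thesis by simp
  qed
qed

definition Sq :: "(real \<times> real) set" where "Sq = {0..1} \<times> {0..1}"

definition Z :: "(real \<times> real) set" where
  "Z = {p \<in> Sq. snd p \<le> fst p} \<union> (Tri \<inter> (\<lambda>p. F (fst p) (snd p) - fst p) -` {..0})"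

lemma Z_closed: "closed Z"
proof -
  have c1: "closed {p \<in> Sq. snd p \<le> fst p}"
  proof -
    have "{p \<in> Sq. snd p \<le> fst p} = Sq \<inter> {p. snd p \<le> fst p}" by auto
    moreover have "closed {p :: real \<times> real. snd p \<le> fst p}"
      by (rule closed_Collect_le) (auto intro: continuous_intros)
    moreover have "closed Sq" unfolding Sq_def by (intro closed_Times) auto
    ultimately show ?thesis by auto
  qed
  have cont: "continuous_on Tri (\<lambda>p. F (fst p) (snd p) - fst p)"
  proof (rule lip2_cont[where L=3])
    fix p q assume pq: "p \<in> Tri" "q \<in> Tri"
    have "\<bar>F (fst q) (snd q) - F (fst p) (snd p)\<bar> \<le> 2 * (\<bar>fst p - fst q\<bar> + \<bar>snd p - snd q\<bar>)"
      using F_lip pq unfolding Tri_def by auto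
    then show "\<bar>(F (fst p) (snd p) - fst p) - (F (fst q) (snd q) - fst q)\<bar> \<le> 3 * (\<bar>fst p - fst q\<bar> + \<bar>snd p - snd q\<bar>)"
      unfolding abs_le_iff by argo
  qed simp
  have "closed (Tri \<inter> (\<lambda>p. F (fst p) (snd p) - fst p) -` {..0})"
    by (rule continuous_closed_preimage[OF cont]) (auto simp: compact_Tri compact_imp_closed)
  then show ?thesis unfolding Z_def using c1 by auto
qed

lemma Df_sub_Z: "Df \<delta> \<subseteq> Z"
proof -
  have "Df_open \<delta> \<subseteq> Z"
  proof
    fix p assume "p \<in> Df_open \<delta>"
    then obtain x y where p: "p = (x, y)" "x \<in> {0..1}" "y \<in> {0..1}" "F x y < min x y"
      unfolding Df_open_def by auto
    show "p \<in> Z"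
    proof (cases "y \<le> x")
      case True then show ?thesis using p unfolding Z_def Sq_def by auto
    next
      case False then show ?thesis using p unfolding Z_def Tri_def by auto
    qed
  qed
  then have "closure (Df_open \<delta>) \<subseteq> Z" using Z_closed by (rule closure_minimal)
  moreover have "{(x, x) | x. x \<in> {0..1}} \<subseteq> Z" unfolding Z_def Sq_def by auto
  ultimately show ?thesis unfolding Df_def by auto
qed

lemma Df_closed: "closed (Df \<delta>)"
proof -
  have "{(x, x) | x. x \<in> {0..1::real}} = (\<lambda>x. (x, x)) ` {0..1}" by auto
  moreover have "compact ((\<lambda>x::real. (x, x)) ` {0..1})"
    by (rule compact_continuous_image) (auto intro: continuous_intros)
  ultimately have "closed {(x, x) | x. x \<in> {0..1::real}}" by (simp add: compact_imp_closed)
  then show ?thesis unfolding Df_def by auto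
qed

lemma gU_prop:
  assumes x: "x \<in> {0..1}"
  shows "x \<le> gU \<delta> x \<and> gU \<delta> x \<le> 1 \<and> (x, gU \<delta> x) \<in> Df \<delta> \<and> (\<forall>s\<in>{0..1}. (x, s) \<in> Df \<delta> \<longrightarrow> s \<le> gU \<delta> x)"
proof -
  define S where "S = {y. y \<in> {0..1} \<and> (x, y) \<in> Df \<delta>}"
  have "S = {0..1} \<inter> ({0..1} \<inter> Pair x -` Df \<delta>)" unfolding S_def by auto
  moreover have "closed ({0..1} \<inter> Pair x -` Df \<delta>)"
    by (rule continuous_closed_preimage) (auto intro: continuous_intros Df_closed)
  ultimately have "compact S" using compact_Int_closed[OF compact_Icc[of 0 1]] by metis
  moreover have "x \<in> S" unfolding S_def Df_def using x by auto
  ultimately obtain s where s: "s \<in> S" "\<forall>t\<in>S. t \<le> s" using compact_attains_sup[of S] by auto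
  have "gU \<delta> x = s" unfolding gU_def
    by (rule Greatest_equality) (use s in \<open>auto simp: S_def\<close>)
  then show ?thesis using s \<open>x \<in> S\<close> unfolding S_def by auto
qed

lemma V1:
  assumes x: "x \<in> {0..1}"
  shows "F x (gU \<delta> x) \<le> x"
proof -
  let ?Y = "gU \<delta> x"
  have Y: "x \<le> ?Y" "?Y \<le> 1" "(x, ?Y) \<in> Df \<delta>" using gU_prop[OF x] by auto
  then have "(x, ?Y) \<in> Z" using Df_sub_Z by auto
  then have "?Y \<le> x \<or> F x ?Y \<le> x" unfolding Z_def by auto
  then show ?thesis
  proof
    assume "?Y \<le> x"
    then have "?Y = x" using Y by auto
    then show ?thesis using F_refl[OF x] h_nonneg[OF x] by simp
  qed
qed

lemma V2:
  assumes x: "x \<in> {0..1}"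
  shows "x \<le> F x (gU \<delta> x)"
proof (rule ccontr)
  let ?Y = "gU \<delta> x"
  have Y: "x \<le> ?Y" "?Y \<le> 1" "\<forall>s\<in>{0..1}. (x, s) \<in> Df \<delta> \<longrightarrow> s \<le> ?Y" using gU_prop[OF x] by auto
  assume "\<not> x \<le> F x ?Y"
  then have lt: "F x ?Y < x" by simp
  have "?Y \<noteq> 1" using F_x1[OF x] lt by auto
  then have Y1: "?Y < 1" using Y by auto
  define e where "e = x - F x ?Y"
  have e: "e > 0" using lt unfolding e_def by simp
  define s where "s = ?Y + min (1 - ?Y) (e / 4)"
  have s: "?Y < s" "s \<le> 1" unfolding s_def using Y1 e by auto
  have "(x, s) \<notin> Df \<delta>"
  proof
    assume "(x, s) \<in> Df \<delta>"
    then have "s \<le> ?Y" using Y(3) s Y x by auto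
    then show False using s by auto
  qed
  then have "(x, s) \<notin> Df_open \<delta>" unfolding Df_def using closure_subset by blast
  then have "\<not> F x s < min x s" unfolding Df_open_def using x s Y by auto
  then have "x \<le> F x s" using s Y by auto
  moreover have "F x s - F x ?Y \<le> 2 * (s - ?Y)" using F_mono_y(2)[of x ?Y s] Y s x by auto
  moreover have "s - ?Y \<le> e / 4" unfolding s_def using min.cobounded2[of "1 - ?Y" "e/4"] by argo
  ultimately show False using e unfolding e_def by argo
qed

lemma VA:
  assumes "0 \<le> x" "x \<le> y" "y \<le> 1"
  shows "Bf x y \<le> mi x (gU \<delta> x)"
proof -
  let ?Y = "gU \<delta> x"
  have x: "x \<in> {0..1}" using assms by auto
  have Y: "x \<le> ?Y" "?Y \<le> 1" using gU_prop[OF x] by auto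
  show ?thesis
  proof (cases "y \<le> ?Y")
    case True
    have "Bf x y \<le> F x y - x + mi x y" unfolding Bf_def by simp
    also have "\<dots> \<le> F x ?Y - x + mi x ?Y" using phi_mono[of x y ?Y] assms True Y by auto
    also have "\<dots> \<le> mi x ?Y" using V1[OF x] by simp
    finally show ?thesis .
  next
    case False
    have "Bf x y \<le> mi x y" unfolding Bf_def by simp
    also have "\<dots> = min (mi x ?Y) (mi ?Y y)" using mi_split[of x ?Y y] assms Y False by simp
    also have "\<dots> \<le> mi x ?Y" by simp
    finally show ?thesis .
  qed
qed

lemma VB:
  assumes x: "x \<in> {0..1}"
  shows "Bf x (gU \<delta> x) = mi x (gU \<delta> x)"
proof -
  have "F x (gU \<delta> x) - x = 0" using V1[OF x] V2[OF x] by argo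
  then show ?thesis unfolding Bf_def by simp
qed


definition K :: "real \<Rightarrow> real \<Rightarrow> real" where
  "K u v = (if u \<le> v then min u (F u v) else v - mi v u)"

lemma K_diag: "t \<in> {0..1} \<Longrightarrow> K t t = \<delta> t"
  unfolding K_def using F_refl[of t] h_nonneg[of t] by (simp add: delta_hat_def)

lemma K_low: "0 \<le> v \<Longrightarrow> v \<le> u \<Longrightarrow> u \<le> 1 \<Longrightarrow> K u v = v - mi v u"
proof -
  assume a: "0 \<le> v" "v \<le> u" "u \<le> 1"
  show ?thesis
  proof (cases "u \<le> v")
    case True
    then have "u = v" using a by simp
    then show ?thesis unfolding K_def using F_refl[of u] h_nonneg[of u] a by simp
  next
    case False then show ?thesis unfolding K_def by simp
  qed
qed

lemma K_up: "u \<le> v \<Longrightarrow> K u v = min u (F u v)"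
  unfolding K_def by simp

definition al :: "real \<Rightarrow> real" where "al u = (T u - h u) / 2"
definition pp :: "real \<Rightarrow> real" where "pp u = u - al u"
definition be :: "real \<Rightarrow> real" where "be v = v - (h v + T v) / 2"

lemma K_sep: "0 \<le> u \<Longrightarrow> u \<le> v \<Longrightarrow> v \<le> 1 \<Longrightarrow> K u v = al u + min (pp u) (be v)"
proof -
  assume a: "0 \<le> u" "u \<le> v" "v \<le> 1"
  have "F u v = al u + be v" unfolding al_def be_def using F_tri[OF a] by (simp add: field_simps)
  then show ?thesis using K_up[OF a(2)] min_shift unfolding pp_def by simp
qed

lemma pp_mono: "0 \<le> u1 \<Longrightarrow> u1 \<le> u2 \<Longrightarrow> u2 \<le> 1 \<Longrightarrow> pp u1 \<le> pp u2"
proof -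
  assume a: "0 \<le> u1" "u1 \<le> u2" "u2 \<le> 1"
  have "\<bar>h u2 - h u1\<bar> \<le> T u2 - T u1" "T u2 - T u1 \<le> u2 - u1" using T_prop[OF a] by auto
  then have "h u1 - h u2 \<le> T u2 - T u1" "T u2 - T u1 \<le> u2 - u1" by auto
  moreover have "2 * pp u1 = 2 * u1 - T u1 + h u1" "2 * pp u2 = 2 * u2 - T u2 + h u2"
    unfolding pp_def al_def by (simp_all add: field_simps)
  ultimately show ?thesis by linarith
qed

lemma be_mono: "0 \<le> v1 \<Longrightarrow> v1 \<le> v2 \<Longrightarrow> v2 \<le> 1 \<Longrightarrow> be v1 \<le> be v2"
proof -
  assume a: "0 \<le> v1" "v1 \<le> v2" "v2 \<le> 1"
  have "\<bar>h v2 - h v1\<bar> \<le> T v2 - T v1" "T v2 - T v1 \<le> v2 - v1" using T_prop[OF a] by auto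
  then have "h v2 - h v1 \<le> T v2 - T v1" "T v2 - T v1 \<le> v2 - v1" by auto
  moreover have "2 * be v1 = 2 * v1 - h v1 - T v1" "2 * be v2 = 2 * v2 - h v2 - T v2"
    unfolding be_def by (simp_all add: field_simps)
  ultimately show ?thesis by linarith
qed

lemma R_above:
  assumes "0 \<le> u1" "u1 \<le> u2" "u2 \<le> v1" "v1 \<le> v2" "v2 \<le> 1"
  shows "0 \<le> R K u1 u2 v1 v2"
proof -
  have "K u2 v2 = al u2 + min (pp u2) (be v2)" "K u1 v1 = al u1 + min (pp u1) (be v1)"
       "K u2 v1 = al u2 + min (pp u2) (be v1)" "K u1 v2 = al u1 + min (pp u1) (be v2)"
    using K_sep assms by auto
  moreover have "0 \<le> min (pp u2) (be v2) + min (pp u1) (be v1) - min (pp u2) (be v1) - min (pp u1) (be v2)"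
    by (rule min_rect) (use pp_mono be_mono assms in auto)
  ultimately show ?thesis unfolding R_def by simp
qed

lemma R_below:
  assumes "0 \<le> v1" "v1 \<le> v2" "v2 \<le> u1" "u1 \<le> u2" "u2 \<le> 1"
  shows "0 \<le> R K u1 u2 v1 v2"
proof -
  have "K u2 v2 = v2 - mi v2 u2" "K u1 v1 = v1 - mi v1 u1"
       "K u2 v1 = v1 - mi v1 u2" "K u1 v2 = v2 - mi v2 u1"
    using K_low assms by auto
  moreover have "mi v1 u2 = min (mi v1 v2) (mi v2 u2)" using mi_split[of v1 v2 u2] assms by simp
  moreover have "mi v2 u2 = min (mi v2 u1) (mi u1 u2)" using mi_split[of v2 u1 u2] assms by simp
  moreover have "mi v1 u1 = min (mi v1 v2) (mi v2 u1)" using mi_split[of v1 v2 u1] assms by simp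
  ultimately show ?thesis unfolding R_def
    using min_three[of "mi v1 v2" "mi v2 u1" "mi u1 u2"] by (simp add: min.assoc)
qed

lemma R_square:
  assumes "0 \<le> a" "a \<le> b" "b \<le> 1"
  shows "0 \<le> R K a b a b"
proof -
  have "h a + h b - TV a b \<le> 2 * mi a b"
  proof -
    have "(h a + h b - TV a b) / 2 \<le> mi a b"
    proof (rule mi_greatest)
      show "a \<le> b" by fact
      fix t assume t: "t \<in> {a..b}"
      have "TV a b = TV a t + TV t b" using TV_add[of a t b] t assms by auto
      moreover have "\<bar>h t - h a\<bar> \<le> TV a t" "\<bar>h b - h t\<bar> \<le> TV t b" using TV_ge t assms by auto
      ultimately have "h a + h b - TV a b \<le> 2 * h t" by (simp add: abs_le_iff)
      then show "(h a + h b - TV a b) / 2 \<le> h t" by (rule half_le)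
    qed
    then show ?thesis by (rule half_le')
  qed
  moreover have "K a b \<le> F a b" using K_up[OF assms(2)] by simp
  moreover have "2 * F a b = 2 * b - h a - h b - TV a b"
    unfolding f_delta_def signed_TV_def using assms by (simp add: field_simps)
  moreover have "K b a = a - mi a b" using K_low assms by auto
  moreover have "K a a = a - h a" "K b b = b - h b" using K_diag assms by (auto simp: delta_hat_def)
  ultimately show ?thesis unfolding R_def by linarith
qed

lemma R_cell:
  assumes "0 \<le> u1" "u1 \<le> u2" "u2 \<le> 1" "0 \<le> v1" "v1 \<le> v2" "v2 \<le> 1"
    and "u2 \<le> v1 \<or> v2 \<le> u1 \<or> (u1 = v1 \<and> u2 = v2) \<or> u1 = u2 \<or> v1 = v2"
  shows "0 \<le> R K u1 u2 v1 v2"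
  using assms R_above[of u1 u2 v1 v2] R_below[of v1 v2 u1 u2] R_square[of u1 u2] R_deg_u R_deg_v
  by auto

lemma K_rect:
  assumes "a \<in> {0..1}" "b \<in> {0..1}" "c \<in> {0..1}" "d \<in> {0..1}" "a \<le> b" "c \<le> d"
  shows "0 \<le> R K a b c d"
proof (cases "b \<le> c \<or> d \<le> a")
  case True then show ?thesis using R_cell assms by auto
next
  case False
  define p where "p = max a c"
  define q where "q = min b d"
  have pq: "a \<le> p" "c \<le> p" "p \<le> q" "q \<le> b" "q \<le> d" "0 \<le> a" "0 \<le> c" "b \<le> 1" "d \<le> 1"
    using False assms unfolding p_def q_def by auto
  have pc: "p = a \<or> p = c" "q = b \<or> q = d" unfolding p_def q_def by auto
  have dec: "R K a b c d = (R K a p c p + R K a p p q + R K a p q d)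
     + (R K p q c p + R K p q p q + R K p q q d) + (R K q b c p + R K q b p q + R K q b q d)"
    unfolding R_def by simp
  have "0 \<le> R K a p c p" using R_cell[of a p c p] pq pc by auto
  moreover have "0 \<le> R K a p p q" using R_cell[of a p p q] pq by auto
  moreover have "0 \<le> R K a p q d" using R_cell[of a p q d] pq by auto
  moreover have "0 \<le> R K p q c p" using R_cell[of p q c p] pq by auto
  moreover have "0 \<le> R K p q p q" using R_cell[of p q p q] pq by auto
  moreover have "0 \<le> R K p q q d" using R_cell[of p q q d] pq by auto
  moreover have "0 \<le> R K q b c p" using R_cell[of q b c p] pq by auto
  moreover have "0 \<le> R K q b p q" using R_cell[of q b p q] pq by auto
  moreover have "0 \<le> R K q b q d" using R_cell[of q b q d] pq pc by auto
  ultimately show ?thesis unfolding dec by linarith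
qed

lemma K_copula: "is_copula K"
proof -
  have bd: "K x 0 = 0 \<and> K 0 x = 0 \<and> K x 1 = x \<and> K 1 x = x" if x: "x \<in> {0..1}" for x
  proof (intro conjI)
    have "mi 0 x = 0"
    proof -
      have "0 \<le> mi 0 x" using mi_nonneg[of 0 x] x by auto
      moreover have "mi 0 x \<le> h 0" using mi_lower[of 0 x 0] x by auto
      ultimately show ?thesis using h0 by simp
    qed
    then show "K x 0 = 0" using K_low[of 0 x] x by simp
    show "K 0 x = 0" using K_up[of 0 x] F_0x[OF x] x by (simp add: min_def)
    show "K x 1 = x" using K_up[of x 1] F_x1[OF x] x by (simp add: min_def)
    have "mi x 1 = 0"
    proof -
      have "0 \<le> mi x 1" using mi_nonneg[of x 1] x by auto
      moreover have "mi x 1 \<le> h 1" using mi_lower[of x 1 1] x by auto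
      ultimately show ?thesis using h1 by simp
    qed
    then show "K 1 x = x" using K_low[of x 1] x by simp
  qed
  have rect: "\<forall>a\<in>{0..1}. \<forall>b\<in>{0..1}. \<forall>c\<in>{0..1}. \<forall>d\<in>{0..1}.
        a \<le> b \<longrightarrow> c \<le> d \<longrightarrow> K b d + K a c - K b c - K a d \<ge> 0"
    using K_rect unfolding R_def by auto
  have rng: "K x y \<in> {0..1}" if "x \<in> {0..1}" "y \<in> {0..1}" for x y
  proof -
    have "K x y + K 0 0 - K x 0 - K 0 y \<ge> 0" using rect that by auto
    moreover have "K 1 y + K x 0 - K 1 0 - K x y \<ge> 0" using rect that by auto
    ultimately show ?thesis using bd that by auto
  qed
  show ?thesis unfolding is_copula_def using bd rect rng by blast
qed

end


lemma K_asym: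
  assumes diag: "is_diagonal \<delta>" and xy: "0 \<le> x" "x \<le> y" "y \<le> 1"
  shows "K \<delta> x y - K \<delta> y x = Bf \<delta> x y"
proof -
  have "K \<delta> x y = min x (f_delta \<delta> x y)" using K_up[OF diag xy(2)] .
  moreover have "K \<delta> y x = x - Inf (delta_hat \<delta> ` {x..y})" using K_low[OF diag xy] .
  ultimately show ?thesis unfolding Bf_def[OF diag] by (simp add: min_def)
qed

theorem theorem4p6:
  fixes \<delta> :: "real \<Rightarrow> real"
  assumes "is_diagonal \<delta>"
  shows "\<exists>x0\<in>{0..1}.
           (\<forall>x\<in>{0..1}. Inf (delta_hat \<delta> ` {x..gU \<delta> x}) \<le> Inf (delta_hat \<delta> ` {x0..gU \<delta> x0})) \<and>
           mu_delta \<delta> = Inf (delta_hat \<delta> ` {x0..gU \<delta> x0})"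
proof -
  note diag = assms
  have cont: "continuous_on Tri (\<lambda>p. Bf \<delta> (fst p) (snd p))"
  proof (rule lip2_cont[where L=4])
    fix p q assume pq: "p \<in> Tri" "q \<in> Tri"
    show "\<bar>Bf \<delta> (fst p) (snd p) - Bf \<delta> (fst q) (snd q)\<bar> \<le> 4 * (\<bar>fst p - fst q\<bar> + \<bar>snd p - snd q\<bar>)"
      using Bf_lip[OF diag, of "fst q" "snd q" "fst p" "snd p"] pq unfolding Tri_def
      by (auto simp: abs_minus_commute)
  qed simp
  have "(0, 0) \<in> Tri" unfolding Tri_def by simp
  then have "Tri \<noteq> {}" by blast
  then obtain pm where pm: "pm \<in> Tri" "\<forall>p\<in>Tri. Bf \<delta> (fst p) (snd p) \<le> Bf \<delta> (fst pm) (snd pm)"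
    using continuous_attains_sup[OF compact_Tri _ cont] by blast
  define x0 where "x0 = fst pm"
  define y0 where "y0 = snd pm"
  define M where "M = Bf \<delta> x0 y0"
  have xy0: "0 \<le> x0" "x0 \<le> y0" "y0 \<le> 1" using pm(1) unfolding Tri_def x0_def y0_def by auto
  have Mmax: "Bf \<delta> x y \<le> M" if "0 \<le> x" "x \<le> y" "y \<le> 1" for x y
    using pm(2)[rule_format, of "(x, y)"] that unfolding Tri_def M_def x0_def y0_def by auto
  have x0in: "x0 \<in> {0..1}" using xy0 by auto
  have Vle: "Inf (delta_hat \<delta> ` {x..gU \<delta> x}) \<le> M" if x: "x \<in> {0..1}" for x
  proof -
    have "x \<le> gU \<delta> x" "gU \<delta> x \<le> 1" using gU_prop[OF diag x] by auto
    then have "Bf \<delta> x (gU \<delta> x) \<le> M" using Mmax x by auto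
    then show ?thesis using VB[OF diag x] by simp
  qed
  have V0: "Inf (delta_hat \<delta> ` {x0..gU \<delta> x0}) = M"
  proof -
    have "M \<le> Inf (delta_hat \<delta> ` {x0..gU \<delta> x0})" unfolding M_def using VA[OF diag xy0] .
    then show ?thesis using Vle[OF x0in] by simp
  qed
  define A where "A = {asym C | C. is_copula C \<and> (\<forall>t\<in>{0..1}. C t t = \<delta> t)}"
  have asym_le: "asym C \<le> M" if C: "is_copula C" "\<forall>t\<in>{0..1}. C t t = \<delta> t" for C
    unfolding asym_def
  proof (rule cSup_least)
    have "\<bar>C 0 0 - C 0 0\<bar> \<in> {\<bar>C x y - C y x\<bar> |x y. x \<in> {0..1} \<and> y \<in> {0..1}}" by force
    then show "{\<bar>C x y - C y x\<bar> |x y. x \<in> {0..1} \<and> y \<in> {0..1}} \<noteq> {}" by blast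
    fix z assume "z \<in> {\<bar>C x y - C y x\<bar> |x y. x \<in> {0..1} \<and> y \<in> {0..1}}"
    then obtain x y where "z = \<bar>C x y - C y x\<bar>" "x \<in> {0..1}" "y \<in> {0..1}" by blast
    then show "z \<le> M" using cop_abs[OF diag C(1) C(2) Mmax] by auto
  qed
  have Kc: "is_copula (K \<delta>)" "\<forall>t\<in>{0..1}. K \<delta> t t = \<delta> t"
    using K_copula[OF diag] K_diag[OF diag] by auto
  have "M \<le> asym (K \<delta>)"
  proof -
    have "M = K \<delta> x0 y0 - K \<delta> y0 x0" unfolding M_def using K_asym[OF diag xy0] by simp
    also have "\<dots> \<le> \<bar>K \<delta> x0 y0 - K \<delta> y0 x0\<bar>" by simp
    also have "\<dots> \<le> asym (K \<delta>)" unfolding asym_def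
    proof (rule cSup_upper)
      show "\<bar>K \<delta> x0 y0 - K \<delta> y0 x0\<bar> \<in> {\<bar>K \<delta> x y - K \<delta> y x\<bar> |x y. x \<in> {0..1} \<and> y \<in> {0..1}}"
        using xy0 by (intro CollectI exI[where x=x0] exI[where x=y0]) auto
      show "bdd_above {\<bar>K \<delta> x y - K \<delta> y x\<bar> |x y. x \<in> {0..1} \<and> y \<in> {0..1}}"
        by (rule bdd_aboveI[where M=M]) (use cop_abs[OF diag Kc(1) Kc(2) Mmax] in auto)
    qed
    finally show ?thesis .
  qed
  have "mu_delta \<delta> = M"
  proof -
    have KA: "asym (K \<delta>) \<in> A" unfolding A_def using Kc by blast
    have "Sup A \<le> M"
      by (rule cSup_least) (use KA asym_le in \<open>auto simp: A_def\<close>)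
    moreover have "asym (K \<delta>) \<le> Sup A"
      by (rule cSup_upper[OF KA]) (rule bdd_aboveI[where M=M], use asym_le in \<open>auto simp: A_def\<close>)
    ultimately show ?thesis using \<open>M \<le> asym (K \<delta>)\<close> unfolding mu_delta_def A_def[symmetric] by simp
  qed
  then show ?thesis
    by (intro bexI[where x=x0] conjI ballI) (use x0in Vle V0 in auto)
qed

end
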